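(* Let $X$ be a quasi-Banach function space over $\mathbf{R}^d$ with the Fatou property. If $M:X\to X$ is bounded, then $M:X''\to X''$ is bounded with $\|M\|_{X''\to X''}\le\|M\|_{X\to X}$.
   Context: A quasi-Banach function space over $\mathbf{R}^d$ is a complete quasi-normed space $X\subseteq L^0(\mathbf{R}^d)$ with the ideal property (if $f\in X$, $|g|\le|f|$ then $g\in X$, $\|g\|_X\le\|f\|_X$) and the saturation property (every set of positive measure contains a subset $F$ of positive measure with $\mathbf{1}_F\in X$). Köthe dual: $X'=\{g:fg\in L^1\ \forall f\in X\}$ with $\|g\|_{X'}=\sup_{\|f\|_X=1}\int|fg|$; $X''=(X')'$. Fatou property: $0\le f_n\uparrow f$ a.e., $\sup\|f_n\|_X<\infty$ imply $f\in X$, $\|f\|_X=\sup\|f_n\|_X$. $M$ is the Hardy–Littlewood maximal operator over axis-parallel cubes. *)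

theory Defs
  imports "HOL-Analysis.Analysis"
begin

text \<open>Functions on R^d are modelled as real-valued functions on a Euclidean space 'a
 (dimension DIM('a)); L^0 = Lebesgue measurable functions, identified a.e. through
 the (a.e.) ideal property.\<close>

definition qbfs :: "('a::euclidean_space \<Rightarrow> real) set \<Rightarrow> (('a \<Rightarrow> real) \<Rightarrow> real) \<Rightarrow> bool" where
  "qbfs X nX \<longleftrightarrow>
     X \<subseteq> borel_measurable lebesgue \<and>
     (\<lambda>x. 0) \<in> X \<and>
     (\<forall>f\<in>X. \<forall>g\<in>X. (\<lambda>x. f x + g x) \<in> X) \<and>
     (\<forall>f\<in>X. \<forall>c. (\<lambda>x. c * f x) \<in> X) \<and>
     (\<forall>f\<in>X. 0 \<le> nX f) \<and>
     (\<forall>f\<in>X. nX f = 0 \<longleftrightarrow> (AE x in lebesgue. f x = 0)) \<and>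
     (\<forall>f\<in>X. \<forall>c. nX (\<lambda>x. c * f x) = \<bar>c\<bar> * nX f) \<and>
     (\<exists>K\<ge>1. \<forall>f\<in>X. \<forall>g\<in>X. nX (\<lambda>x. f x + g x) \<le> K * (nX f + nX g)) \<and>
     (\<forall>u. (\<forall>k. u k \<in> X) \<longrightarrow>
          (\<forall>e>0. \<exists>N. \<forall>m\<ge>N. \<forall>k\<ge>N. nX (\<lambda>x. u m x - u k x) < e) \<longrightarrow>
          (\<exists>f\<in>X. (\<lambda>k. nX (\<lambda>x. u k x - f x)) \<longlonglongrightarrow> 0)) \<and>
     (\<forall>f\<in>X. \<forall>g\<in>borel_measurable lebesgue.
          (AE x in lebesgue. \<bar>g x\<bar> \<le> \<bar>f x\<bar>) \<longrightarrow> g \<in> X \<and> nX g \<le> nX f) \<and>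
     (\<forall>E\<in>sets lebesgue. emeasure lebesgue E > 0 \<longrightarrow>
          (\<exists>F\<in>sets lebesgue. F \<subseteq> E \<and> emeasure lebesgue F > 0 \<and> indicator F \<in> X))"

definition fatou_property :: "('a::euclidean_space \<Rightarrow> real) set \<Rightarrow> (('a \<Rightarrow> real) \<Rightarrow> real) \<Rightarrow> bool" where
  "fatou_property X nX \<longleftrightarrow>
     (\<forall>u f. (\<forall>k. u k \<in> X) \<longrightarrow> f \<in> borel_measurable lebesgue \<longrightarrow>
        (AE x in lebesgue. (\<forall>k. 0 \<le> u k x \<and> u k x \<le> u (Suc k) x) \<and> (\<lambda>k. u k x) \<longlonglongrightarrow> f x) \<longrightarrow>
        bdd_above (range (\<lambda>k. nX (u k))) \<longrightarrow>
        f \<in> X \<and> nX f = (SUP k. nX (u k)))"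

definition kothe :: "('a::euclidean_space \<Rightarrow> real) set \<Rightarrow> ('a \<Rightarrow> real) set" where
  "kothe X = {g \<in> borel_measurable lebesgue. \<forall>f\<in>X. integrable lebesgue (\<lambda>x. f x * g x)}"

definition kothe_norm :: "('a::euclidean_space \<Rightarrow> real) set \<Rightarrow> (('a \<Rightarrow> real) \<Rightarrow> 'b::one) \<Rightarrow> ('a \<Rightarrow> real) \<Rightarrow> ennreal" where
  "kothe_norm X nX g = (SUP f\<in>{f\<in>X. nX f = 1}. \<integral>\<^sup>+ x. ennreal \<bar>f x * g x\<bar> \<partial>lebesgue)"

definition cubes :: "'a::euclidean_space set set" where
  "cubes = {box a b | a b. \<exists>l>0. \<forall>i\<in>Basis. (b - a) \<bullet> i = l}"

definition maximal :: "('a::euclidean_space \<Rightarrow> real) \<Rightarrow> 'a \<Rightarrow> ennreal" where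
  "maximal f x = (SUP Q\<in>{Q\<in>cubes. x \<in> Q}.
      (\<integral>\<^sup>+ y\<in>Q. ennreal \<bar>f y\<bar> \<partial>lebesgue) / emeasure lebesgue Q)"

definition maximal_in :: "('a::euclidean_space \<Rightarrow> real) set \<Rightarrow> ('a \<Rightarrow> real) \<Rightarrow> bool" where
  "maximal_in S f \<longleftrightarrow> (AE x in lebesgue. maximal f x \<noteq> \<infinity>) \<and> (\<lambda>x. enn2real (maximal f x)) \<in> S"

end

theory Submission
  imports Defs "HOL-Analysis.Analysis"
begin

definition avg :: "('a::euclidean_space \<Rightarrow> real) \<Rightarrow> 'a set \<Rightarrow> ennreal" where
  "avg h Q = (\<integral>\<^sup>+y\<in>Q. ennreal \<bar>h y\<bar> \<partial>lebesgue) / emeasure lebesgue Q"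

lemma maximal_avg: "maximal h x = (SUP Q\<in>{Q\<in>cubes. x \<in> Q}. avg h Q)"
  by (simp add: maximal_def avg_def)

lemma cubes_open: "Q \<in> cubes \<Longrightarrow> open Q"
  unfolding cubes_def by auto

lemma cubes_sets: "Q \<in> cubes \<Longrightarrow> Q \<in> sets lebesgue"
  unfolding cubes_def by auto

lemma max_ge: "Q \<in> cubes \<Longrightarrow> x \<in> Q \<Longrightarrow> avg h Q \<le> maximal h x"
  unfolding maximal_avg by (rule SUP_upper) auto

lemma box_cube: "l > 0 \<Longrightarrow> box a (a + l *\<^sub>R One) \<in> cubes"
  unfolding cubes_def
  by (intro CollectI exI[of _ a] exI[of _ "a + l *\<^sub>R One"] conjI exI[of _ l]) (auto simp: inner_simps)

lemma cubes_ne: "cubes \<noteq> {}"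
  using box_cube[of 1 0] by auto

lemma CF: obtains Qs :: "nat \<Rightarrow> 'a::euclidean_space set" where "\<And>i. Qs i \<in> cubes"
   "\<And>x. maximal h x = (SUP i. (if x \<in> Qs i then avg h (Qs i) else 0))"
proof -
  define F where "F = (\<lambda>t::rat. {Q\<in>cubes. ennreal (real_of_rat t) < avg h Q})"
  have "\<exists>F'. F' \<subseteq> F t \<and> countable F' \<and> \<Union>F' = \<Union>(F t)" for t
  proof -
    have "\<And>S. S \<in> F t \<Longrightarrow> open S" unfolding F_def using cubes_open by auto
    from Lindelof[OF this] show ?thesis by metis
  qed
  then obtain F' where F': "\<And>t. F' t \<subseteq> F t" "\<And>t. countable (F' t)" "\<And>t. \<Union>(F' t) = \<Union>(F t)"
    by metis
  obtain Q0 :: "'a set" where Q0: "Q0 \<in> cubes" using cubes_ne by blast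
  define CC where "CC = insert Q0 (\<Union>t. F' t)"
  have CCc: "countable CC" unfolding CC_def using F'(2) by auto
  have CCne: "CC \<noteq> {}" unfolding CC_def by auto
  have CCsub: "CC \<subseteq> cubes" unfolding CC_def using F'(1) Q0 F_def by auto
  define Qs where "Qs = from_nat_into CC"
  have rQ: "range Qs = CC" unfolding Qs_def using CCc CCne by simp
  have Qc: "Qs i \<in> cubes" for i using rQ CCsub by auto
  have "maximal h x = (SUP i. (if x \<in> Qs i then avg h (Qs i) else 0))" for x
  proof (rule antisym)
    show "(SUP i. (if x \<in> Qs i then avg h (Qs i) else 0)) \<le> maximal h x"
      by (rule SUP_least) (auto intro: max_ge Qc)
    show "maximal h x \<le> (SUP i. (if x \<in> Qs i then avg h (Qs i) else 0))"
    proof (rule ccontr)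
      assume "\<not> ?thesis"
      then have lt: "(SUP i. (if x \<in> Qs i then avg h (Qs i) else 0)) < maximal h x" by simp
      then obtain t :: rat where t: "(SUP i. (if x \<in> Qs i then avg h (Qs i) else 0)) < real_of_rat t"
        "real_of_rat t < maximal h x" using ennreal_rat_dense by blast
      then obtain Q where Q: "Q \<in> cubes" "x \<in> Q" "ennreal (real_of_rat t) < avg h Q"
        unfolding maximal_avg less_SUP_iff by auto
      then have "x \<in> \<Union>(F t)" unfolding F_def by auto
      then obtain Q' where Q': "Q' \<in> F' t" "x \<in> Q'" using F'(3)[of t] by auto
      then have "Q' \<in> CC" unfolding CC_def by auto
      then obtain i where i: "Qs i = Q'" using rQ by (metis rangeE)
      have "ennreal (real_of_rat t) < avg h Q'" using Q' F'(1)[of t] unfolding F_def by auto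
      also have "\<dots> = (if x \<in> Qs i then avg h (Qs i) else 0)" using i Q' by simp
      also have "\<dots> \<le> (SUP i. (if x \<in> Qs i then avg h (Qs i) else 0))" by (rule SUP_upper) auto
      finally show False using t(1) by simp
    qed
  qed
  then show ?thesis using that Qc by blast
qed

lemma maximal_meas: "maximal h \<in> borel_measurable lebesgue"
proof -
  obtain Qs :: "nat \<Rightarrow> 'a set" where Q: "\<And>i. Qs i \<in> cubes"
   "\<And>x. maximal h x = (SUP i. (if x \<in> Qs i then avg h (Qs i) else 0))" using CF by metis
  have [measurable]: "Qs i \<in> sets lebesgue" for i using cubes_sets[OF Q(1)] .
  have "maximal h = (\<lambda>x. SUP i. (if x \<in> Qs i then avg h (Qs i) else 0))" using Q(2) by auto
  also have "\<dots> \<in> borel_measurable lebesgue" by measurable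
  finally show ?thesis .
qed

definition linE :: "(nat \<Rightarrow> 'a set) \<Rightarrow> (nat \<Rightarrow> ennreal) \<Rightarrow> nat \<Rightarrow> nat \<Rightarrow> 'a set" where
  "linE Qs a N i = {x. x \<in> Qs i \<and> (\<forall>j<N. x \<in> Qs j \<longrightarrow> a j \<le> a i) \<and> (\<forall>j<i. x \<in> Qs j \<longrightarrow> a j < a i)}"

lemma linE_sub: "linE Qs a N i \<subseteq> Qs i"
  unfolding linE_def by auto

lemma linE_disj: "i < N \<Longrightarrow> k < N \<Longrightarrow> x \<in> linE Qs a N i \<Longrightarrow> x \<in> linE Qs a N k \<Longrightarrow> i = k"
  unfolding linE_def
  by (metis (no_types, lifting) linorder_neqE_nat mem_Collect_eq not_le)

lemma linE_sets:
  assumes "\<And>i. Qs i \<in> sets M" "space M = UNIV"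
  shows "linE Qs a N i \<in> sets M"
proof -
  have [measurable]: "Qs j \<in> sets M" for j using assms(1) .
  have "linE Qs a N i = {x \<in> space M. x \<in> Qs i \<and> (\<forall>j<N. x \<in> Qs j \<longrightarrow> a j \<le> a i) \<and> (\<forall>j<i. x \<in> Qs j \<longrightarrow> a j < a i)}"
    unfolding linE_def using assms(2) by auto
  also have "\<dots> \<in> sets M" by measurable
  finally show ?thesis .
qed

lemma sum_collapse:
  fixes b :: "nat \<Rightarrow> ennreal"
  assumes "i0 < N" "x \<in> linE Qs a N i0"
  shows "(\<Sum>i<N. indicator (linE Qs a N i) x * b i) = b i0"
proof -
  have "(\<Sum>i<N. indicator (linE Qs a N i) x * b i) = indicator (linE Qs a N i0) x * b i0 +
      (\<Sum>i\<in>{..<N} - {i0}. indicator (linE Qs a N i) x * b i)"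
    using assms(1) by (subst sum.remove[of _ i0]) auto
  also have "(\<Sum>i\<in>{..<N} - {i0}. indicator (linE Qs a N i) x * b i) = 0"
    using linE_disj[OF _ assms(1) _ assms(2)] by (intro sum.neutral) (auto split: split_indicator)
  finally show ?thesis using assms(2) by simp
qed

lemma sum_none:
  fixes b :: "nat \<Rightarrow> ennreal"
  assumes "\<And>i. i < N \<Longrightarrow> x \<notin> linE Qs a N i"
  shows "(\<Sum>i<N. indicator (linE Qs a N i) x * b i) = 0"
  using assms by (intro sum.neutral) (auto split: split_indicator)

lemma linE_sum_le:
  fixes b :: "nat \<Rightarrow> ennreal"
  assumes "\<And>i. i < N \<Longrightarrow> x \<in> Qs i \<Longrightarrow> b i \<le> m"
  shows "(\<Sum>i<N. indicator (linE Qs a N i) x * b i) \<le> m"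
proof (cases "\<exists>i<N. x \<in> linE Qs a N i")
  case True
  then obtain i0 where "i0 < N" "x \<in> linE Qs a N i0" by blast
  then show ?thesis using sum_collapse[of i0 N x Qs a b] assms[of i0] linE_sub[of Qs a N i0] by auto
next
  case False
  then show ?thesis using sum_none[of N x Qs a b] by simp
qed

lemma linE_sum_eq:
  fixes a :: "nat \<Rightarrow> ennreal"
  shows "(\<Sum>i<N. indicator (linE Qs a N i) x * a i) = (SUP i\<in>{..<N}. (if x \<in> Qs i then a i else 0))"
proof (cases "\<exists>j<N. x \<in> Qs j")
  case True
  define A where "A = {j. j < N \<and> x \<in> Qs j}"
  have A: "finite A" "A \<noteq> {}" unfolding A_def using True by auto
  define m where "m = Max (a ` A)"
  have mA: "m \<in> a ` A" unfolding m_def using A by simp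
  have ge: "j \<in> A \<Longrightarrow> a j \<le> m" for j unfolding m_def using A by simp
  define i0 where "i0 = (LEAST i. i \<in> A \<and> a i = m)"
  have ex: "\<exists>i. i \<in> A \<and> a i = m" using mA by auto
  have i0: "i0 \<in> A" "a i0 = m" using LeastI_ex[OF ex] unfolding i0_def by auto
  have lt: "j < i0 \<Longrightarrow> x \<in> Qs j \<Longrightarrow> a j < m" for j
  proof -
    assume j: "j < i0" "x \<in> Qs j"
    then have jA: "j \<in> A" using i0(1) unfolding A_def by auto
    have "a j \<noteq> m" using not_less_Least[of j "\<lambda>i. i \<in> A \<and> a i = m"] j jA unfolding i0_def by auto
    then show "a j < m" using ge[OF jA] by simp
  qed
  have xE: "x \<in> linE Qs a N i0"
    unfolding linE_def using i0 ge lt unfolding A_def by auto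
  have i0N: "i0 < N" using i0 unfolding A_def by auto
  have "(\<Sum>i<N. indicator (linE Qs a N i) x * a i) = m" using sum_collapse[OF i0N xE] i0 by simp
  also have "m = (SUP i\<in>{..<N}. (if x \<in> Qs i then a i else 0))"
  proof (rule antisym)
    show "m \<le> (SUP i\<in>{..<N}. (if x \<in> Qs i then a i else 0))"
      using i0 i0N unfolding A_def by (intro SUP_upper2[of i0]) auto
    show "(SUP i\<in>{..<N}. (if x \<in> Qs i then a i else 0)) \<le> m"
      using ge unfolding A_def by (intro SUP_least) auto
  qed
  finally show ?thesis .
next
  case False
  have nE: "x \<notin> linE Qs a N i" if "i < N" for i using False that linE_sub[of Qs a N i] by auto
  have "(\<Sum>i<N. indicator (linE Qs a N i) x * a i) = 0"
    by (rule sum_none) (rule nE)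
  moreover have "(SUP i\<in>{..<N}. (if x \<in> Qs i then a i else 0)) \<le> 0"
    by (rule SUP_least) (use False in auto)
  then have "(SUP i\<in>{..<N}. (if x \<in> Qs i then a i else 0)) = 0" by simp
  ultimately show ?thesis by simp
qed

lemma SUP_lessThan_SUP:
  fixes f :: "nat \<Rightarrow> ennreal"
  shows "(SUP N. (SUP i\<in>{..<N}. f i)) = (SUP i. f i)"
proof (rule antisym)
  show "(SUP N. (SUP i\<in>{..<N}. f i)) \<le> (SUP i. f i)"
    by (intro SUP_least SUP_mono) auto
  show "(SUP i. f i) \<le> (SUP N. (SUP i\<in>{..<N}. f i))"
  proof (rule SUP_least)
    fix i
    have "f i \<le> (SUP j\<in>{..<Suc i}. f j)" by (rule SUP_upper) auto
    also have "\<dots> \<le> (SUP N. (SUP i\<in>{..<N}. f i))" by (rule SUP_upper) auto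
    finally show "f i \<le> (SUP N. (SUP i\<in>{..<N}. f i))" .
  qed
qed

lemma incseq_SUP_lessThan:
  fixes f :: "nat \<Rightarrow> ennreal"
  shows "incseq (\<lambda>N. (SUP i\<in>{..<N}. f i))"
  by (intro monoI SUP_subset_mono) auto

lemma cube_n: "box (-(real n + 1) *\<^sub>R One) ((real n + 1) *\<^sub>R One) \<in> (cubes :: 'a::euclidean_space set set)"
proof -
  have "box (-(real n + 1) *\<^sub>R One) (-(real n + 1) *\<^sub>R One + (2 * (real n + 1)) *\<^sub>R One) \<in> (cubes :: 'a set set)"
    by (rule box_cube) simp
  moreover have "-(real n + 1) *\<^sub>R One + (2 * (real n + 1)) *\<^sub>R One = (real n + 1) *\<^sub>R (One :: 'a)"
    by (subst scaleR_left_distrib[symmetric]) simp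
  ultimately show ?thesis by simp
qed

lemma cube_n_meas:
  fixes n :: nat
  defines "Q \<equiv> box (-(real n + 1) *\<^sub>R One) ((real n + 1) *\<^sub>R (One::'a::euclidean_space))"
  shows "0 < emeasure lebesgue Q" "emeasure lebesgue Q < \<infinity>"
proof -
  have "emeasure lebesgue Q = emeasure lborel Q" unfolding Q_def by simp
  also have "\<dots> = (\<Prod>b\<in>(Basis::'a set). ((real n + 1) *\<^sub>R One - (-(real n + 1) *\<^sub>R One)) \<bullet> b)"
    unfolding Q_def by (rule emeasure_lborel_box) (simp add: inner_simps)
  finally have eq: "emeasure lebesgue Q = ennreal (\<Prod>b\<in>(Basis::'a set). ((real n + 1) *\<^sub>R One - (-(real n + 1) *\<^sub>R One)) \<bullet> b)" .
  have pos: "0 < (\<Prod>b\<in>(Basis::'a set). ((real n + 1) *\<^sub>R One - (-(real n + 1) *\<^sub>R One)) \<bullet> b)"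
    by (intro prod_pos) (simp add: inner_simps)
  show "0 < emeasure lebesgue Q" unfolding eq using pos by (simp only: ennreal_less_zero_iff)
  show "emeasure lebesgue Q < \<infinity>" unfolding eq by simp
qed

lemma cube_n_cover: "\<exists>n. x \<in> box (-(real n + 1) *\<^sub>R One) ((real n + 1) *\<^sub>R (One::'a::euclidean_space))"
proof -
  obtain n :: nat where "norm x < real n" using reals_Archimedean2 by blast
  then have n: "norm x < real n + 1" by simp
  have "x \<in> box (-(real n + 1) *\<^sub>R One) ((real n + 1) *\<^sub>R (One::'a))"
    unfolding mem_box
  proof
    fix i :: 'a assume i: "i \<in> Basis"
    have "\<bar>x \<bullet> i\<bar> \<le> norm x" by (rule Basis_le_norm[OF i])
    then show "(-(real n + 1) *\<^sub>R One) \<bullet> i < x \<bullet> i \<and> x \<bullet> i < ((real n + 1) *\<^sub>R One) \<bullet> i"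
      using n i by (auto simp: inner_simps)
  qed
  then show ?thesis by blast
qed

locale mset =
  fixes X :: "('a::euclidean_space \<Rightarrow> real) set" and nX :: "('a \<Rightarrow> real) \<Rightarrow> real" and C :: real
  assumes q: "qbfs X nX" and fat: "fatou_property X nX" and C0: "C \<ge> 0"
    and bnd: "\<forall>f\<in>X. maximal_in X f \<and> nX (\<lambda>x. enn2real (maximal f x)) \<le> C * nX f"
begin

abbreviation "N1 \<equiv> kothe_norm X nX"
abbreviation "X1 \<equiv> kothe X"

lemma meas: "f \<in> X \<Longrightarrow> f \<in> borel_measurable lebesgue"
  using q unfolding qbfs_def by blast
lemma zeroX: "(\<lambda>x. 0) \<in> X"
  using q unfolding qbfs_def by blast
lemma addX: "f \<in> X \<Longrightarrow> g \<in> X \<Longrightarrow> (\<lambda>x. f x + g x) \<in> X"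
  using q unfolding qbfs_def by blast
lemma smultX: "f \<in> X \<Longrightarrow> (\<lambda>x. c * f x) \<in> X"
  using q unfolding qbfs_def by blast
lemma nonneg: "f \<in> X \<Longrightarrow> 0 \<le> nX f"
  using q unfolding qbfs_def by blast
lemma zero_iff: "f \<in> X \<Longrightarrow> nX f = 0 \<longleftrightarrow> (AE x in lebesgue. f x = 0)"
  using q unfolding qbfs_def by blast
lemma hom: "f \<in> X \<Longrightarrow> nX (\<lambda>x. c * f x) = \<bar>c\<bar> * nX f"
  using q unfolding qbfs_def by blast
lemma quasi: obtains K where "K \<ge> 1" "\<And>f g. f \<in> X \<Longrightarrow> g \<in> X \<Longrightarrow> nX (\<lambda>x. f x + g x) \<le> K * (nX f + nX g)"
proof -
  have "\<exists>K\<ge>1. \<forall>f\<in>X. \<forall>g\<in>X. nX (\<lambda>x. f x + g x) \<le> K * (nX f + nX g)"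
    using q unfolding qbfs_def by blast
  then show ?thesis using that by blast
qed
lemma ideal: "f \<in> X \<Longrightarrow> g \<in> borel_measurable lebesgue \<Longrightarrow> (AE x in lebesgue. \<bar>g x\<bar> \<le> \<bar>f x\<bar>) \<Longrightarrow> g \<in> X \<and> nX g \<le> nX f"
  using q unfolding qbfs_def by blast
lemma sat: "E \<in> sets lebesgue \<Longrightarrow> emeasure lebesgue E > 0 \<Longrightarrow>
   \<exists>F\<in>sets lebesgue. F \<subseteq> E \<and> emeasure lebesgue F > 0 \<and> indicator F \<in> X"
  using q unfolding qbfs_def by blast
lemma fatou: "(\<And>k. u k \<in> X) \<Longrightarrow> f \<in> borel_measurable lebesgue \<Longrightarrow>
        (AE x in lebesgue. (\<forall>k. 0 \<le> u k x \<and> u k x \<le> u (Suc k) x) \<and> (\<lambda>k. u k x) \<longlonglongrightarrow> f x) \<Longrightarrow>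
        bdd_above (range (\<lambda>k. nX (u k))) \<Longrightarrow>
        f \<in> X \<and> nX f = (SUP k. nX (u k))"
  using fat unfolding fatou_property_def by blast

lemma holder:
  assumes f: "f \<in> X" and g: "g \<in> borel_measurable lebesgue"
  shows "(\<integral>\<^sup>+x. ennreal \<bar>f x * g x\<bar> \<partial>lebesgue) \<le> N1 g * ennreal (nX f)"
proof (cases "nX f = 0")
  case True
  then have "AE x in lebesgue. f x = 0" using zero_iff f by blast
  then have "AE x in lebesgue. ennreal \<bar>f x * g x\<bar> = 0" by eventually_elim simp
  then have "(\<integral>\<^sup>+x. ennreal \<bar>f x * g x\<bar> \<partial>lebesgue) = (\<integral>\<^sup>+x. 0 \<partial>(lebesgue::'a measure))"
    by (rule nn_integral_cong_AE)
  then show ?thesis by simp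
next
  case False
  define c where "c = nX f"
  have c: "c > 0" using False nonneg[OF f] c_def by auto
  define f' where "f' = (\<lambda>x. (1/c) * f x)"
  have f'X: "f' \<in> X" unfolding f'_def by (rule smultX[OF f])
  have "nX f' = 1" unfolding f'_def using hom[OF f, of "1/c"] c c_def by simp
  then have le: "(\<integral>\<^sup>+x. ennreal \<bar>f' x * g x\<bar> \<partial>lebesgue) \<le> N1 g"
    unfolding kothe_norm_def using f'X by (intro SUP_upper) auto
  have mf': "f' \<in> borel_measurable lebesgue" using meas[OF f'X] .
  have "(\<integral>\<^sup>+x. ennreal \<bar>f x * g x\<bar> \<partial>lebesgue) = (\<integral>\<^sup>+x. ennreal c * ennreal \<bar>f' x * g x\<bar> \<partial>lebesgue)"
    using c by (intro nn_integral_cong) (simp add: f'_def ennreal_mult[symmetric] abs_mult)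
  also have "\<dots> = ennreal c * (\<integral>\<^sup>+x. ennreal \<bar>f' x * g x\<bar> \<partial>lebesgue)"
    using mf' g by (intro nn_integral_cmult) measurable
  also have "\<dots> \<le> ennreal c * N1 g" using le by (rule mult_left_mono) simp
  finally show ?thesis by (simp add: c_def mult.commute)
qed


lemma N1_hom:
  assumes g: "g \<in> borel_measurable lebesgue" and c: "c \<ge> 0"
  shows "N1 (\<lambda>x. c * g x) = ennreal c * N1 g"
proof -
  have "\<And>f. f \<in> X \<Longrightarrow> (\<integral>\<^sup>+x. ennreal \<bar>f x * (c * g x)\<bar> \<partial>lebesgue) = ennreal c * (\<integral>\<^sup>+x. ennreal \<bar>f x * g x\<bar> \<partial>lebesgue)"
  proof -
    fix f assume f: "f \<in> X"
    have mf: "f \<in> borel_measurable lebesgue" using meas[OF f] .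
    have "(\<integral>\<^sup>+x. ennreal \<bar>f x * (c * g x)\<bar> \<partial>lebesgue) = (\<integral>\<^sup>+x. ennreal c * ennreal \<bar>f x * g x\<bar> \<partial>lebesgue)"
      using c by (intro nn_integral_cong) (simp add: ennreal_mult[symmetric] abs_mult)
    also have "\<dots> = ennreal c * (\<integral>\<^sup>+x. ennreal \<bar>f x * g x\<bar> \<partial>lebesgue)"
      using mf g by (intro nn_integral_cmult) measurable
    finally show "?thesis f" .
  qed
  then show ?thesis unfolding kothe_norm_def SUP_mult_left_ennreal
    by (intro SUP_cong) auto
qed

lemma sat_fin:
  assumes G: "G \<in> borel_measurable lebesgue"
    and fin: "\<And>f. f \<in> X \<Longrightarrow> (\<integral>\<^sup>+x. ennreal \<bar>f x\<bar> * G x \<partial>lebesgue) < \<infinity>"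
  shows "AE x in lebesgue. G x \<noteq> \<infinity>"
proof (rule ccontr)
  define E where "E = {x \<in> space lebesgue. \<not> G x \<noteq> \<infinity>}"
  have E: "E \<in> sets lebesgue" unfolding E_def using G by measurable
  assume "\<not> (AE x in lebesgue. G x \<noteq> \<infinity>)"
  then have "emeasure lebesgue E \<noteq> 0" using AE_iff_measurable[OF E E_def[symmetric]] by blast
  then have "emeasure lebesgue E > 0" by (simp add: zero_less_iff_neq_zero)
  then obtain F where F: "F \<in> sets lebesgue" "F \<subseteq> E" "emeasure lebesgue F > 0" "indicator F \<in> X"
    using sat[OF E] by blast
  have "(\<integral>\<^sup>+x. ennreal \<bar>indicator F x\<bar> * G x \<partial>lebesgue) = (\<integral>\<^sup>+x. \<infinity> * indicator F x \<partial>lebesgue)"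
    using F(2) unfolding E_def by (intro nn_integral_cong) (auto split: split_indicator)
  also have "\<dots> = \<infinity> * emeasure lebesgue F"
    using F(1) by (simp add: nn_integral_cmult_indicator)
  also have "\<dots> = \<infinity>" using F(3) by (simp add: ennreal_top_mult)
  finally show False using fin[OF F(4)] by simp
qed

lemma N1_zero:
  assumes g: "g \<in> borel_measurable lebesgue" and z: "N1 g = 0"
  shows "AE x in lebesgue. g x = 0"
proof (rule ccontr)
  define E where "E = {x \<in> space lebesgue. \<not> g x = 0}"
  have E: "E \<in> sets lebesgue" unfolding E_def using g by measurable
  assume "\<not> (AE x in lebesgue. g x = 0)"
  then have "emeasure lebesgue E \<noteq> 0" using AE_iff_measurable[OF E E_def[symmetric]] by blast
  then have "emeasure lebesgue E > 0" by (simp add: zero_less_iff_neq_zero)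
  then obtain F where F: "F \<in> sets lebesgue" "F \<subseteq> E" "emeasure lebesgue F > 0" "indicator F \<in> X"
    using sat[OF E] by blast
  have "(\<integral>\<^sup>+x. ennreal \<bar>indicator F x * g x\<bar> \<partial>lebesgue) \<le> N1 g * ennreal (nX (indicator F))"
    using holder[OF F(4) g] .
  then have "(\<integral>\<^sup>+x. ennreal \<bar>indicator F x * g x\<bar> \<partial>lebesgue) = 0" using z by simp
  then have "AE x in lebesgue. ennreal \<bar>indicator F x * g x\<bar> = 0"
  proof -
    note [measurable] = F(1) g
    show ?thesis using \<open>(\<integral>\<^sup>+x. ennreal \<bar>indicator F x * g x\<bar> \<partial>lebesgue) = 0\<close>
      by (subst (asm) nn_integral_0_iff_AE) measurable
  qed
  then have "AE x in lebesgue. x \<notin> F"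
    by eventually_elim (use F(2) E_def in \<open>auto split: split_indicator\<close>)
  then have "emeasure lebesgue F = 0"
    using AE_iff_measurable[OF F(1), of "\<lambda>x. x \<notin> F"] F(1) sets.sets_into_space by auto
  then show False using F(3) by simp
qed

abbreviation "N2 \<equiv> kothe_norm X1 N1"

lemma X1_smult: "G \<in> X1 \<Longrightarrow> (\<lambda>x. c * G x) \<in> X1"
  unfolding kothe_def
  by (auto intro: integrable_mult_right[of c] simp: mult.left_commute[of _ c])

lemma X1_meas: "G \<in> X1 \<Longrightarrow> G \<in> borel_measurable lebesgue"
  unfolding kothe_def by auto

lemma holder2:
  assumes h: "h \<in> borel_measurable lebesgue" and G: "G \<in> X1" and fin: "N1 G \<noteq> \<infinity>"
  shows "(\<integral>\<^sup>+x. ennreal \<bar>G x * h x\<bar> \<partial>lebesgue) \<le> N2 h * N1 G"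
proof (cases "N1 G = 0")
  case True
  then have "AE x in lebesgue. G x = 0" using N1_zero X1_meas[OF G] by blast
  then have "AE x in lebesgue. ennreal \<bar>G x * h x\<bar> = 0" by eventually_elim simp
  then have "(\<integral>\<^sup>+x. ennreal \<bar>G x * h x\<bar> \<partial>lebesgue) = (\<integral>\<^sup>+x. 0 \<partial>(lebesgue::'a measure))"
    by (rule nn_integral_cong_AE)
  then show ?thesis by simp
next
  case False
  define c where "c = enn2real (N1 G)"
  have Nc: "N1 G = ennreal c" using fin unfolding c_def by (cases "N1 G") auto
  have c: "c > 0" using False Nc by (cases "c > 0") (auto simp: ennreal_eq_0_iff)
  define G' where "G' = (\<lambda>x. (1/c) * G x)"
  have G'X: "G' \<in> X1" unfolding G'_def by (rule X1_smult[OF G])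
  have "N1 G' = ennreal (1/c) * N1 G" unfolding G'_def using c by (intro N1_hom X1_meas[OF G]) auto
  also have "\<dots> = 1" using c Nc by (simp add: ennreal_mult[symmetric])
  finally have "N1 G' = 1" .
  then have le: "(\<integral>\<^sup>+x. ennreal \<bar>G' x * h x\<bar> \<partial>lebesgue) \<le> N2 h"
    unfolding kothe_norm_def[of X1] using G'X by (intro SUP_upper) auto
  have mG': "G' \<in> borel_measurable lebesgue" using X1_meas[OF G'X] .
  have "(\<integral>\<^sup>+x. ennreal \<bar>G x * h x\<bar> \<partial>lebesgue) = (\<integral>\<^sup>+x. ennreal c * ennreal \<bar>G' x * h x\<bar> \<partial>lebesgue)"
    using c by (intro nn_integral_cong) (simp add: G'_def ennreal_mult[symmetric] abs_mult)
  also have "\<dots> = ennreal c * (\<integral>\<^sup>+x. ennreal \<bar>G' x * h x\<bar> \<partial>lebesgue)"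
    using mG' h by (intro nn_integral_cmult) measurable
  also have "\<dots> \<le> ennreal c * N2 h" using le by (rule mult_left_mono) simp
  finally show ?thesis by (simp add: Nc mult.commute)
qed


end

context mset begin
lemma enn_le: "ennreal (enn2real y) \<le> y"
  by (cases y) auto

lemma suminf_ge_term: "(f::nat \<Rightarrow> ennreal) n \<le> suminf f"
proof (rule ccontr)
  assume "\<not> f n \<le> suminf f"
  then have "suminf f < f n" by simp
  from ennreal_suminf_lessD[OF this, of n] show False by simp
qed

lemma N2_fin:
  assumes h: "h \<in> kothe X1"
  shows "N2 h \<noteq> \<infinity>"
proof
  assume inf: "N2 h = \<infinity>"
  have "\<forall>n. \<exists>g. g \<in> X1 \<and> N1 g = 1 \<and> ennreal (4^n) < (\<integral>\<^sup>+x. ennreal \<bar>g x * h x\<bar> \<partial>lebesgue)"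
  proof
    fix n :: nat
    have "ennreal (4^n) < N2 h" using inf by simp
    then show "\<exists>g. g \<in> X1 \<and> N1 g = 1 \<and> ennreal (4^n) < (\<integral>\<^sup>+x. ennreal \<bar>g x * h x\<bar> \<partial>lebesgue)"
      unfolding kothe_norm_def[of X1] less_SUP_iff by (auto simp del: kothe_norm_def)
  qed
  then obtain gs where gs: "\<And>n. gs n \<in> X1" "\<And>n. N1 (gs n) = 1"
    "\<And>n. ennreal (4^n) < (\<integral>\<^sup>+x. ennreal \<bar>gs n x * h x\<bar> \<partial>lebesgue)"
    by metis
  have mg[measurable]: "\<And>n. gs n \<in> borel_measurable lebesgue" using gs(1) X1_meas by blast
  have mh[measurable]: "h \<in> borel_measurable lebesgue" using h unfolding kothe_def by auto
  define G where "G = (\<lambda>x. \<Sum>n. ennreal ((1/2)^n) * ennreal \<bar>gs n x\<bar>)"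
  have mG[measurable]: "G \<in> borel_measurable lebesgue" unfolding G_def by measurable
  have bound: "(\<integral>\<^sup>+x. ennreal \<bar>f x\<bar> * G x \<partial>lebesgue) \<le> ennreal 2 * ennreal (nX f)" if f: "f \<in> X" for f
  proof -
    have mf[measurable]: "f \<in> borel_measurable lebesgue" using meas[OF f] .
    have "(\<integral>\<^sup>+x. ennreal \<bar>f x\<bar> * G x \<partial>lebesgue) =
        (\<integral>\<^sup>+x. (\<Sum>n. ennreal ((1/2)^n) * ennreal \<bar>f x * gs n x\<bar>) \<partial>lebesgue)"
      unfolding G_def ennreal_suminf_cmult[symmetric]
      by (intro nn_integral_cong suminf_cong) (simp add: ennreal_mult[symmetric] abs_mult mult_ac)
    also have "\<dots> = (\<Sum>n. (\<integral>\<^sup>+x. ennreal ((1/2)^n) * ennreal \<bar>f x * gs n x\<bar> \<partial>lebesgue))"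
      by (rule nn_integral_suminf) measurable
    also have "\<dots> = (\<Sum>n. ennreal ((1/2)^n) * (\<integral>\<^sup>+x. ennreal \<bar>f x * gs n x\<bar> \<partial>lebesgue))"
      by (intro suminf_cong nn_integral_cmult) measurable
    also have "\<dots> \<le> (\<Sum>n. ennreal ((1/2)^n) * ennreal (nX f))"
    proof (intro suminf_le mult_left_mono)
      fix n show "(\<integral>\<^sup>+x. ennreal \<bar>f x * gs n x\<bar> \<partial>lebesgue) \<le> ennreal (nX f)"
        using holder[OF f mg[of n]] gs(2)[of n] by simp
    qed auto
    also have "\<dots> = (\<Sum>n. ennreal ((1/2)^n)) * ennreal (nX f)" by simp
    also have "(\<Sum>n. ennreal ((1/2::real)^n)) = ennreal 2"
    proof -
      have "(\<Sum>n. ennreal ((1/2::real)^n)) = ennreal (\<Sum>n. (1/2::real)^n)"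
        by (rule suminf_ennreal2) (auto intro: summable_geometric)
      also have "(\<Sum>n. (1/2::real)^n) = 2" by (subst suminf_geometric) auto
      finally show ?thesis .
    qed
    finally show ?thesis .
  qed
  have AEG: "AE x in lebesgue. G x \<noteq> \<infinity>"
  proof (rule sat_fin[OF mG])
    fix f assume f: "f \<in> X"
    show "(\<integral>\<^sup>+x. ennreal \<bar>f x\<bar> * G x \<partial>lebesgue) < \<infinity>"
      by (rule le_less_trans[OF bound[OF f]]) (simp add: ennreal_mult_less_top)
  qed
  define Gr where "Gr = (\<lambda>x. enn2real (G x))"
  have mGr[measurable]: "Gr \<in> borel_measurable lebesgue" unfolding Gr_def by measurable
  have GrX1: "Gr \<in> X1"
    unfolding kothe_def
  proof (intro CollectI conjI ballI mGr)
    fix f assume f: "f \<in> X"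
    have mf[measurable]: "f \<in> borel_measurable lebesgue" using meas[OF f] .
    have "(\<integral>\<^sup>+x. ennreal (norm (f x * Gr x)) \<partial>lebesgue) \<le> (\<integral>\<^sup>+x. ennreal \<bar>f x\<bar> * G x \<partial>lebesgue)"
      unfolding Gr_def
      by (intro nn_integral_mono) (simp add: abs_mult ennreal_mult mult_left_mono enn_le)
    also have "\<dots> < \<infinity>" by (rule le_less_trans[OF bound[OF f]]) (simp add: ennreal_mult_less_top)
    finally show "integrable lebesgue (\<lambda>x. f x * Gr x)"
      by (intro integrableI_bounded) measurable
  qed
  then have "integrable lebesgue (\<lambda>x. Gr x * h x)" using h unfolding kothe_def by auto
  then have "(\<integral>\<^sup>+x. ennreal (norm (Gr x * h x)) \<partial>lebesgue) < \<infinity>"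
    unfolding integrable_iff_bounded by auto
  then have "(\<integral>\<^sup>+x. ennreal \<bar>Gr x * h x\<bar> \<partial>lebesgue) < top" by simp
  then obtain v where v: "(\<integral>\<^sup>+x. ennreal \<bar>Gr x * h x\<bar> \<partial>lebesgue) = ennreal v" "v \<ge> 0"
    unfolding less_top_ennreal by blast
  have "ennreal (2^n) \<le> ennreal v" for n :: nat
  proof -
    have "ennreal (2^n) = ennreal ((1/2)^n) * ennreal (4^n)"
      by (simp add: ennreal_mult[symmetric] power_mult_distrib[symmetric])
    also have "\<dots> \<le> ennreal ((1/2)^n) * (\<integral>\<^sup>+x. ennreal \<bar>gs n x * h x\<bar> \<partial>lebesgue)"
      using gs(3)[of n] by (intro mult_left_mono) auto
    also have "\<dots> = (\<integral>\<^sup>+x. ennreal ((1/2)^n) * ennreal \<bar>gs n x * h x\<bar> \<partial>lebesgue)"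
      by (rule nn_integral_cmult[symmetric]) measurable
    also have "\<dots> \<le> (\<integral>\<^sup>+x. ennreal \<bar>Gr x * h x\<bar> \<partial>lebesgue)"
    proof (rule nn_integral_mono_AE)
      show "AE x in lebesgue. ennreal ((1/2)^n) * ennreal \<bar>gs n x * h x\<bar> \<le> ennreal \<bar>Gr x * h x\<bar>"
        using AEG
      proof eventually_elim
        case (elim x)
        have "ennreal ((1/2)^n) * ennreal \<bar>gs n x * h x\<bar> = (ennreal ((1/2)^n) * ennreal \<bar>gs n x\<bar>) * ennreal \<bar>h x\<bar>"
          by (simp add: ennreal_mult[symmetric] abs_mult mult_ac)
        also have "\<dots> \<le> G x * ennreal \<bar>h x\<bar>"
          unfolding G_def by (intro mult_right_mono suminf_ge_term) auto
        also have "\<dots> = ennreal \<bar>Gr x * h x\<bar>"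
          using elim unfolding Gr_def by (cases "G x") (auto simp: abs_mult ennreal_mult)
        finally show ?case .
      qed
    qed
    finally show ?thesis using v by simp
  qed
  then have "\<And>n::nat. 2^n \<le> v" using v(2) by (simp add: ennreal_le_iff)
  moreover obtain n :: nat where "v < 2^n" using real_arch_pow[of 2 v] by auto
  ultimately show False by (meson not_le)
qed

end

context mset begin

lemma sum_quasi:
  assumes K: "K \<ge> 1" and qu: "\<And>f g. f \<in> X \<Longrightarrow> g \<in> X \<Longrightarrow> nX (\<lambda>x. f x + g x) \<le> K * (nX f + nX g)"
  shows "(\<And>j. b j \<in> X) \<Longrightarrow> (\<lambda>x. \<Sum>j<n. b j x) \<in> X \<and> nX (\<lambda>x. \<Sum>j<n. b j x) \<le> (\<Sum>j<n. K^(j+1) * nX (b j))"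
proof (induction n arbitrary: b)
  case 0
  have "nX (\<lambda>x. 0) = 0" using zero_iff[OF zeroX] by simp
  then show ?case using zeroX by simp
next
  case (Suc n)
  have IH: "(\<lambda>x. \<Sum>j<n. b (Suc j) x) \<in> X \<and> nX (\<lambda>x. \<Sum>j<n. b (Suc j) x) \<le> (\<Sum>j<n. K^(j+1) * nX (b (Suc j)))"
    using Suc.IH[of "\<lambda>j. b (Suc j)"] Suc.prems by blast
  have eq: "(\<lambda>x. \<Sum>j<Suc n. b j x) = (\<lambda>x. b 0 x + (\<Sum>j<n. b (Suc j) x))"
    by (simp del: sum.lessThan_Suc add: sum.lessThan_Suc_shift)
  have inX: "(\<lambda>x. \<Sum>j<Suc n. b j x) \<in> X" unfolding eq using addX Suc.prems IH by blast
  have "nX (\<lambda>x. \<Sum>j<Suc n. b j x) \<le> K * (nX (b 0) + nX (\<lambda>x. \<Sum>j<n. b (Suc j) x))"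
    unfolding eq using qu Suc.prems IH by blast
  also have "\<dots> \<le> K * (nX (b 0) + (\<Sum>j<n. K^(j+1) * nX (b (Suc j))))"
    using IH K by (intro mult_left_mono add_left_mono) auto
  also have "\<dots> = (\<Sum>j<Suc n. K^(j+1) * nX (b j))"
    by (simp del: sum.lessThan_Suc add: sum.lessThan_Suc_shift sum_distrib_left algebra_simps)
  finally show ?case using inX by simp
qed

lemma tendsto_enn2real':
  assumes "(u \<longlongrightarrow> a) F" "a \<noteq> \<infinity>"
  shows "((\<lambda>n. enn2real (u n)) \<longlongrightarrow> enn2real a) F"
proof -
  obtain l where l: "a = ennreal l" "l \<ge> 0" using assms(2) by (cases a) auto
  show ?thesis using assms(1) unfolding l using tendsto_enn2real[of u l F] l by simp
qed

lemma geom_half: "(\<Sum>j<n. (1/2::real)^j) \<le> 2"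
proof -
  have "(\<Sum>j<n. (1/2::real)^j) = 2 - 2 * (1/2)^n"
    by (induction n) (auto simp: field_simps)
  then show ?thesis by simp
qed

lemma min_ennreal: "min (ennreal a) (ennreal b) = ennreal (min a b)"
  by (cases "a \<le> b") (auto simp: min_def ennreal_leI intro: antisym ennreal_leI)


lemma N1_fin:
  assumes g: "g \<in> X1"
  shows "N1 g \<noteq> \<infinity>"
proof
  assume inf: "N1 g = \<infinity>"
  obtain K where K: "K \<ge> 1" and qu: "\<And>f g. f \<in> X \<Longrightarrow> g \<in> X \<Longrightarrow> nX (\<lambda>x. f x + g x) \<le> K * (nX f + nX g)"
    using quasi by blast
  have mg[measurable]: "g \<in> borel_measurable lebesgue" using X1_meas[OF g] .
  have "\<forall>n. \<exists>f. f \<in> X \<and> nX f = 1 \<and> ennreal ((2*K)^n * 2^n) < (\<integral>\<^sup>+x. ennreal \<bar>f x * g x\<bar> \<partial>lebesgue)"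
  proof
    fix n :: nat
    have "ennreal ((2*K)^n * 2^n) < N1 g" using inf by simp
    then show "\<exists>f. f \<in> X \<and> nX f = 1 \<and> ennreal ((2*K)^n * 2^n) < (\<integral>\<^sup>+x. ennreal \<bar>f x * g x\<bar> \<partial>lebesgue)"
      unfolding kothe_norm_def less_SUP_iff by (auto simp del: kothe_norm_def)
  qed
  then obtain fs where fs: "\<And>n. fs n \<in> X" "\<And>n. nX (fs n) = 1"
    "\<And>n. ennreal ((2*K)^n * 2^n) < (\<integral>\<^sup>+x. ennreal \<bar>fs n x * g x\<bar> \<partial>lebesgue)"
    by metis
  have mfs[measurable]: "\<And>n. fs n \<in> borel_measurable lebesgue" using fs(1) meas by blast
  define r where "r = 1 / (2*K)"
  have r: "r > 0" "r \<le> 1" using K unfolding r_def by auto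
  define a where "a = (\<lambda>j x. r^j * \<bar>fs j x\<bar>)"
  have ma[measurable]: "\<And>j. a j \<in> borel_measurable lebesgue" unfolding a_def by measurable
  have absX: "(\<lambda>x. \<bar>fs j x\<bar>) \<in> X \<and> nX (\<lambda>x. \<bar>fs j x\<bar>) \<le> 1" for j
    using ideal[OF fs(1)[of j], of "\<lambda>x. \<bar>fs j x\<bar>"] fs(2)[of j] by auto
  have aX: "a j \<in> X" for j unfolding a_def using smultX absX by blast
  have na: "nX (a j) \<le> r^j" for j
  proof -
    have "nX (a j) = r^j * nX (\<lambda>x. \<bar>fs j x\<bar>)" unfolding a_def using hom absX r by simp
    also have "\<dots> \<le> r^j * 1" using absX r by (intro mult_left_mono) auto
    finally show ?thesis by simp
  qed
  have a0: "a j x \<ge> 0" for j x unfolding a_def using r by simp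
  define S where "S = (\<lambda>n x. \<Sum>j<n. a j x)"
  have mS[measurable]: "\<And>n. S n \<in> borel_measurable lebesgue" unfolding S_def by measurable
  define B where "B = 2 * K"
  have SX: "S n \<in> X \<and> nX (S n) \<le> B" for n
  proof -
    have 1: "S n \<in> X \<and> nX (S n) \<le> (\<Sum>j<n. K^(j+1) * nX (a j))"
      unfolding S_def using sum_quasi[OF K qu, of a n] aX by blast
    have "(\<Sum>j<n. K^(j+1) * nX (a j)) \<le> (\<Sum>j<n. K^(j+1) * r^j)"
      using na K by (intro sum_mono mult_left_mono) auto
    also have "\<dots> = (\<Sum>j<n. K * (1/2)^j)"
      unfolding r_def using K by (intro sum.cong) (auto simp: power_divide field_simps)
    also have "\<dots> = K * (\<Sum>j<n. (1/2)^j)" by (simp add: sum_distrib_left)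
    also have "\<dots> \<le> K * 2" using K geom_half[of n] by (intro mult_left_mono) auto
    finally show ?thesis using 1 unfolding B_def by simp
  qed
  have S0: "S n x \<ge> 0" for n x unfolding S_def using a0 by (simp add: sum_nonneg)
  have Smono: "S n x \<le> S (Suc n) x" for n x unfolding S_def using a0 by simp
  have Sinc: "incseq (\<lambda>n. ennreal (S n x))" for x
    by (intro incseq_SucI) (simp add: Smono ennreal_leI)
  define SS where "SS = (\<lambda>x. SUP n. ennreal (S n x))"
  have mSS[measurable]: "SS \<in> borel_measurable lebesgue" unfolding SS_def by measurable
  have SSlim: "(\<lambda>n. ennreal (S n x)) \<longlonglongrightarrow> SS x" for x
    unfolding SS_def by (rule LIMSEQ_SUP[OF Sinc])
  define E where "E = {x \<in> space lebesgue. SS x = \<infinity>}"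
  have mE[measurable]: "E \<in> sets lebesgue" unfolding E_def by measurable
  define V where "V = (\<lambda>(k::nat) x. enn2real (min (SS x) (ennreal k)))"
  have mV[measurable]: "\<And>k. V k \<in> borel_measurable lebesgue" unfolding V_def by measurable
  have VX: "V k \<in> X \<and> nX (V k) \<le> B" for k
  proof -
    define u where "u = (\<lambda>n x. min (S n x) (real k))"
    have mu: "u n \<in> borel_measurable lebesgue" for n unfolding u_def by measurable
    have uX: "u n \<in> X \<and> nX (u n) \<le> nX (S n)" for n
      using ideal[OF conjunct1[OF SX[of n]] mu[of n]] S0 unfolding u_def by auto
    have conv: "(\<lambda>n. u n x) \<longlonglongrightarrow> V k x" for x
    proof -
      have "(\<lambda>n. min (ennreal (S n x)) (ennreal k)) \<longlonglongrightarrow> min (SS x) (ennreal k)"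
        by (intro tendsto_min SSlim tendsto_const)
      then have "(\<lambda>n. enn2real (min (ennreal (S n x)) (ennreal k))) \<longlonglongrightarrow> enn2real (min (SS x) (ennreal k))"
        by (rule tendsto_enn2real') (auto simp: min_def top_unique)
      moreover have "enn2real (min (ennreal (S n x)) (ennreal k)) = u n x" for n
        unfolding u_def min_ennreal using S0 by simp
      ultimately show ?thesis unfolding V_def by simp
    qed
    have "V k \<in> X \<and> nX (V k) = (SUP n. nX (u n))"
    proof (rule fatou)
      show "u n \<in> X" for n using uX by blast
      show "AE x in lebesgue. (\<forall>n. 0 \<le> u n x \<and> u n x \<le> u (Suc n) x) \<and> (\<lambda>n. u n x) \<longlonglongrightarrow> V k x"
      proof (intro AE_I2 conjI allI)
        fix x n
        show "0 \<le> u n x" unfolding u_def using S0 by simp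
        show "u n x \<le> u (Suc n) x" unfolding u_def using Smono by (meson min.mono order_refl)
        show "(\<lambda>n. u n x) \<longlonglongrightarrow> V k x" by (rule conv)
      qed
      show "bdd_above (range (\<lambda>n. nX (u n)))"
        using uX SX by (intro bdd_aboveI[of _ B]) (auto intro: order_trans)
    qed (rule mV)
    moreover have "(SUP n. nX (u n)) \<le> B"
      using uX SX by (intro cSUP_least) (auto intro: order_trans)
    ultimately show ?thesis by simp
  qed
  have VE: "x \<in> E \<Longrightarrow> V k x = k" for k x unfolding V_def E_def by simp
  have V0: "V k x \<ge> 0" for k x unfolding V_def by simp
  have mI[measurable]: "(indicator E :: 'a \<Rightarrow> real) \<in> borel_measurable lebesgue" by measurable
  have IX: "indicator E \<in> X"
    using ideal[OF conjunct1[OF VX[of 1]] mI] VE V0 by (auto split: split_indicator)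
  have kI: "real k * nX (indicator E) \<le> B" for k
  proof -
    have "(\<lambda>x. real k * indicator E x) \<in> X \<and> nX (\<lambda>x. real k * indicator E x) \<le> nX (V k)"
      using VE V0 by (intro ideal[OF conjunct1[OF VX[of k]]]) (auto split: split_indicator)
    then show ?thesis using hom[OF IX, of "real k"] VX[of k] by simp
  qed
  have "nX (indicator E) = 0"
  proof (rule ccontr)
    assume "nX (indicator E) \<noteq> 0"
    then have pos: "nX (indicator E) > 0" using nonneg[OF IX] by simp
    obtain k :: nat where "B / nX (indicator E) < k" using reals_Archimedean2 by blast
    then have "B < k * nX (indicator E)" using pos by (simp add: field_simps)
    then show False using kI[of k] by simp
  qed
  then have "AE x in lebesgue. indicator E x = (0::real)" using zero_iff[OF IX] by simp
  then have AEfin: "AE x in lebesgue. SS x \<noteq> \<infinity>"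
    by eventually_elim (auto simp: E_def split: split_indicator_asm)
  define Sr where "Sr = (\<lambda>x. enn2real (SS x))"
  have mSr[measurable]: "Sr \<in> borel_measurable lebesgue" unfolding Sr_def by measurable
  have "Sr \<in> X \<and> nX Sr = (SUP n. nX (S n))"
  proof (rule fatou)
    show "S n \<in> X" for n using SX by blast
    show "AE x in lebesgue. (\<forall>n. 0 \<le> S n x \<and> S n x \<le> S (Suc n) x) \<and> (\<lambda>n. S n x) \<longlonglongrightarrow> Sr x"
      using AEfin
    proof eventually_elim
      case (elim x)
      have "(\<lambda>n. enn2real (ennreal (S n x))) \<longlonglongrightarrow> enn2real (SS x)"
        by (rule tendsto_enn2real'[OF SSlim elim])
      then have "(\<lambda>n. S n x) \<longlonglongrightarrow> Sr x" unfolding Sr_def using S0 by simp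
      then show ?case using S0 Smono by blast
    qed
    show "bdd_above (range (\<lambda>n. nX (S n)))"
      using SX by (intro bdd_aboveI[of _ B]) auto
  qed (rule mSr)
  then have SrX: "Sr \<in> X" by blast
  then have "integrable lebesgue (\<lambda>x. Sr x * g x)" using g unfolding kothe_def by auto
  then have "(\<integral>\<^sup>+x. ennreal (norm (Sr x * g x)) \<partial>lebesgue) < \<infinity>"
    unfolding integrable_iff_bounded by auto
  then have "(\<integral>\<^sup>+x. ennreal \<bar>Sr x * g x\<bar> \<partial>lebesgue) < top" by simp
  then obtain v where v: "(\<integral>\<^sup>+x. ennreal \<bar>Sr x * g x\<bar> \<partial>lebesgue) = ennreal v" "v \<ge> 0"
    unfolding less_top_ennreal by blast
  have "ennreal (2^n) \<le> ennreal v" for n :: nat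
  proof -
    have "ennreal (2^n) = ennreal (r^n) * ennreal ((2*K)^n * 2^n)"
      using K unfolding r_def by (simp add: ennreal_mult[symmetric] power_divide)
    also have "\<dots> \<le> ennreal (r^n) * (\<integral>\<^sup>+x. ennreal \<bar>fs n x * g x\<bar> \<partial>lebesgue)"
      using fs(3)[of n] by (intro mult_left_mono) auto
    also have "\<dots> = (\<integral>\<^sup>+x. ennreal (r^n) * ennreal \<bar>fs n x * g x\<bar> \<partial>lebesgue)"
      by (rule nn_integral_cmult[symmetric]) measurable
    also have "\<dots> \<le> (\<integral>\<^sup>+x. ennreal \<bar>Sr x * g x\<bar> \<partial>lebesgue)"
    proof (rule nn_integral_mono_AE)
      show "AE x in lebesgue. ennreal (r^n) * ennreal \<bar>fs n x * g x\<bar> \<le> ennreal \<bar>Sr x * g x\<bar>"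
        using AEfin
      proof eventually_elim
        case (elim x)
        have "a n x \<le> S (Suc n) x" unfolding S_def using a0 by (simp add: sum_nonneg)
        also have "S (Suc n) x \<le> Sr x"
        proof -
          have "ennreal (S (Suc n) x) \<le> SS x" unfolding SS_def by (rule SUP_upper) auto
          then have "enn2real (ennreal (S (Suc n) x)) \<le> enn2real (SS x)"
            using elim by (intro enn2real_mono) (auto simp: top.not_eq_extremum)
          then show ?thesis unfolding Sr_def using S0 by simp
        qed
        finally have "a n x \<le> Sr x" .
        then have "\<bar>a n x * g x\<bar> \<le> \<bar>Sr x * g x\<bar>" using a0 by (simp add: abs_mult mult_right_mono)
        moreover have "ennreal (r^n) * ennreal \<bar>fs n x * g x\<bar> = ennreal \<bar>a n x * g x\<bar>"
          unfolding a_def using r by (simp add: ennreal_mult[symmetric] abs_mult)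
        ultimately show ?case by (simp add: ennreal_leI)
      qed
    qed
    finally show ?thesis using v by simp
  qed
  then have "\<And>n::nat. 2^n \<le> v" using v(2) by (simp add: ennreal_le_iff)
  moreover obtain n :: nat where "v < 2^n" using real_arch_pow[of 2 v] by auto
  ultimately show False by (meson not_le)
qed

end

context mset begin

lemma key:
  assumes h[measurable]: "h \<in> borel_measurable lebesgue" and g: "g \<in> X1" and gfin: "N1 g \<noteq> \<infinity>"
  shows "(\<integral>\<^sup>+x. maximal h x * ennreal \<bar>g x\<bar> \<partial>lebesgue) \<le> ennreal C * N2 h * N1 g"
proof -
  obtain Qs :: "nat \<Rightarrow> 'a set" where Q: "\<And>i. Qs i \<in> cubes"
    "\<And>x. maximal h x = (SUP i. (if x \<in> Qs i then avg h (Qs i) else 0))" using CF by metis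
  have mQ[measurable]: "\<And>i. Qs i \<in> sets lebesgue" using cubes_sets Q(1) by blast
  have mg[measurable]: "g \<in> borel_measurable lebesgue" using X1_meas[OF g] .
  define a where "a = (\<lambda>i. avg h (Qs i))"
  have mE[measurable]: "\<And>N i. linE Qs a N i \<in> sets lebesgue" by (rule linE_sets) auto
  define L where "L = (\<lambda>N x. \<Sum>i<N. indicator (linE Qs a N i) x * a i)"
  have Leq: "L N x = (SUP i\<in>{..<N}. (if x \<in> Qs i then a i else 0))" for N x
    unfolding L_def by (rule linE_sum_eq)
  have Msup: "maximal h x = (SUP N. L N x)" for x
    unfolding Leq Q(2) a_def SUP_lessThan_SUP ..
  have mL[measurable]: "L N \<in> borel_measurable lebesgue" for N unfolding L_def by measurable
  have "(\<integral>\<^sup>+x. maximal h x * ennreal \<bar>g x\<bar> \<partial>lebesgue) = (\<integral>\<^sup>+x. (SUP N. L N x * ennreal \<bar>g x\<bar>) \<partial>lebesgue)"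
    by (simp add: Msup SUP_mult_right_ennreal)
  also have "\<dots> = (SUP N. \<integral>\<^sup>+x. L N x * ennreal \<bar>g x\<bar> \<partial>lebesgue)"
  proof (rule nn_integral_monotone_convergence_SUP)
    show "incseq (\<lambda>N x. L N x * ennreal \<bar>g x\<bar>)"
    proof (intro monoI le_funI mult_right_mono)
      fix N M :: nat and x assume "N \<le> M"
      then show "L N x \<le> L M x" unfolding Leq by (intro SUP_subset_mono) auto
    qed simp
  qed measurable
  also have "\<dots> \<le> ennreal C * N2 h * N1 g"
  proof (rule SUP_least)
    fix N
    define c where "c = (\<lambda>i. \<integral>\<^sup>+x. indicator (linE Qs a N i) x * ennreal \<bar>g x\<bar> \<partial>lebesgue)"
    define GN where "GN = (\<lambda>y. \<Sum>i<N. (c i / emeasure lebesgue (Qs i)) * indicator (Qs i) y)"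
    have mGN[measurable]: "GN \<in> borel_measurable lebesgue" unfolding GN_def by measurable
    have ID: "(\<integral>\<^sup>+y. ennreal \<bar>f y\<bar> * GN y \<partial>lebesgue) =
        (\<integral>\<^sup>+x. (\<Sum>i<N. indicator (linE Qs a N i) x * avg f (Qs i)) * ennreal \<bar>g x\<bar> \<partial>lebesgue)"
      if mf[measurable]: "f \<in> borel_measurable lebesgue" for f
    proof -
      have "(\<integral>\<^sup>+y. ennreal \<bar>f y\<bar> * GN y \<partial>lebesgue) =
          (\<integral>\<^sup>+y. (\<Sum>i<N. (c i / emeasure lebesgue (Qs i)) * (ennreal \<bar>f y\<bar> * indicator (Qs i) y)) \<partial>lebesgue)"
        unfolding GN_def sum_distrib_left by (intro nn_integral_cong sum.cong refl) (simp only: mult_ac)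
      also have "\<dots> = (\<Sum>i<N. \<integral>\<^sup>+y. (c i / emeasure lebesgue (Qs i)) * (ennreal \<bar>f y\<bar> * indicator (Qs i) y) \<partial>lebesgue)"
        by (rule nn_integral_sum) measurable
      also have "\<dots> = (\<Sum>i<N. (c i / emeasure lebesgue (Qs i)) * \<integral>\<^sup>+y. ennreal \<bar>f y\<bar> * indicator (Qs i) y \<partial>lebesgue)"
        by (intro sum.cong refl nn_integral_cmult) measurable
      also have "\<dots> = (\<Sum>i<N. avg f (Qs i) * c i)"
        by (intro sum.cong refl) (simp add: avg_def ennreal_divide_times mult.commute)
      also have "\<dots> = (\<Sum>i<N. \<integral>\<^sup>+x. avg f (Qs i) * (indicator (linE Qs a N i) x * ennreal \<bar>g x\<bar>) \<partial>lebesgue)"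
        unfolding c_def by (intro sum.cong refl nn_integral_cmult[symmetric]) measurable
      also have "\<dots> = (\<integral>\<^sup>+x. (\<Sum>i<N. avg f (Qs i) * (indicator (linE Qs a N i) x * ennreal \<bar>g x\<bar>)) \<partial>lebesgue)"
        by (rule nn_integral_sum[symmetric]) measurable
      also have "\<dots> = (\<integral>\<^sup>+x. (\<Sum>i<N. indicator (linE Qs a N i) x * avg f (Qs i)) * ennreal \<bar>g x\<bar> \<partial>lebesgue)"
        unfolding sum_distrib_right by (intro nn_integral_cong sum.cong refl) (simp only: mult_ac)
      finally show ?thesis .
    qed
    have bnd: "(\<integral>\<^sup>+y. ennreal \<bar>f y\<bar> * GN y \<partial>lebesgue) \<le> N1 g * ennreal (C * nX f)" if f: "f \<in> X" for f
    proof -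
      have mf[measurable]: "f \<in> borel_measurable lebesgue" using meas[OF f] .
      have Mf: "maximal_in X f" "nX (\<lambda>x. enn2real (maximal f x)) \<le> C * nX f" using bnd f by auto
      have AEf: "AE x in lebesgue. maximal f x \<noteq> \<infinity>" and MfX: "(\<lambda>x. enn2real (maximal f x)) \<in> X"
        using Mf(1) unfolding maximal_in_def by auto
      have mM[measurable]: "maximal f \<in> borel_measurable lebesgue" by (rule maximal_meas)
      have "(\<integral>\<^sup>+y. ennreal \<bar>f y\<bar> * GN y \<partial>lebesgue) =
          (\<integral>\<^sup>+x. (\<Sum>i<N. indicator (linE Qs a N i) x * avg f (Qs i)) * ennreal \<bar>g x\<bar> \<partial>lebesgue)"
        by (rule ID) (rule mf)
      also have "\<dots> \<le> (\<integral>\<^sup>+x. maximal f x * ennreal \<bar>g x\<bar> \<partial>lebesgue)"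
        by (intro nn_integral_mono mult_right_mono linE_sum_le max_ge Q(1)) auto
      also have "\<dots> = (\<integral>\<^sup>+x. ennreal \<bar>enn2real (maximal f x) * g x\<bar> \<partial>lebesgue)"
      proof (rule nn_integral_cong_AE)
        show "AE x in lebesgue. maximal f x * ennreal \<bar>g x\<bar> = ennreal \<bar>enn2real (maximal f x) * g x\<bar>"
          using AEf by eventually_elim (auto simp: abs_mult ennreal_mult less_top)
      qed
      also have "\<dots> \<le> N1 g * ennreal (nX (\<lambda>x. enn2real (maximal f x)))"
        by (rule holder[OF MfX mg])
      also have "\<dots> \<le> N1 g * ennreal (C * nX f)"
        using Mf(2) by (intro mult_left_mono ennreal_leI) auto
      finally show ?thesis .
    qed
    have fin: "(\<integral>\<^sup>+y. ennreal \<bar>f y\<bar> * GN y \<partial>lebesgue) < \<infinity>" if f: "f \<in> X" for f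
      by (rule le_less_trans[OF bnd[OF f]]) (use gfin in \<open>simp add: ennreal_mult_less_top top.not_eq_extremum\<close>)
    have AEG: "AE x in lebesgue. GN x \<noteq> \<infinity>" by (rule sat_fin[OF mGN fin])
    define Gr where "Gr = (\<lambda>x. enn2real (GN x))"
    have mGr[measurable]: "Gr \<in> borel_measurable lebesgue" unfolding Gr_def by measurable
    have GrI: "(\<integral>\<^sup>+x. ennreal \<bar>f x * Gr x\<bar> \<partial>lebesgue) \<le> (\<integral>\<^sup>+x. ennreal \<bar>f x\<bar> * GN x \<partial>lebesgue)" for f
      unfolding Gr_def
      by (intro nn_integral_mono) (simp add: abs_mult ennreal_mult mult_left_mono enn_le)
    have GrX1: "Gr \<in> X1"
      unfolding kothe_def
    proof (intro CollectI conjI ballI mGr)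
      fix f assume f: "f \<in> X"
      have mf[measurable]: "f \<in> borel_measurable lebesgue" using meas[OF f] .
      have "(\<integral>\<^sup>+x. ennreal (norm (f x * Gr x)) \<partial>lebesgue) < \<infinity>"
        using GrI[of f] fin[OF f] by simp
      then show "integrable lebesgue (\<lambda>x. f x * Gr x)"
        by (intro integrableI_bounded) measurable
    qed
    have N1Gr: "N1 Gr \<le> ennreal C * N1 g"
      unfolding kothe_norm_def[of X nX Gr]
    proof (rule SUP_least)
      fix f assume "f \<in> {f \<in> X. nX f = 1}"
      then have f: "f \<in> X" "nX f = 1" by auto
      show "(\<integral>\<^sup>+x. ennreal \<bar>f x * Gr x\<bar> \<partial>lebesgue) \<le> ennreal C * kothe_norm X nX g"
        using order_trans[OF GrI bnd[OF f(1)]] f(2) by (simp add: mult.commute)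
    qed
    have N1Grfin: "N1 Gr \<noteq> \<infinity>"
    proof -
      have "ennreal C * N1 g < \<infinity>" using gfin by (simp add: ennreal_mult_less_top top.not_eq_extremum)
      then show ?thesis using le_less_trans[OF N1Gr] by auto
    qed
    have "(\<integral>\<^sup>+x. L N x * ennreal \<bar>g x\<bar> \<partial>lebesgue) = (\<integral>\<^sup>+y. ennreal \<bar>h y\<bar> * GN y \<partial>lebesgue)"
      unfolding ID[OF h] L_def a_def ..
    also have "\<dots> = (\<integral>\<^sup>+x. ennreal \<bar>Gr x * h x\<bar> \<partial>lebesgue)"
    proof (rule nn_integral_cong_AE)
      show "AE x in lebesgue. ennreal \<bar>h x\<bar> * GN x = ennreal \<bar>Gr x * h x\<bar>"
        using AEG by eventually_elim (auto simp: Gr_def abs_mult ennreal_mult less_top mult.commute)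
    qed
    also have "\<dots> \<le> N2 h * N1 Gr" by (rule holder2[OF h GrX1 N1Grfin])
    also have "\<dots> \<le> N2 h * (ennreal C * N1 g)" by (intro mult_left_mono N1Gr) simp
    finally show "(\<integral>\<^sup>+x. L N x * ennreal \<bar>g x\<bar> \<partial>lebesgue) \<le> ennreal C * N2 h * N1 g"
      by (simp add: mult_ac)
  qed
  finally show ?thesis .
qed

end

context mset begin

lemma ind_X1:
  fixes Q :: "'a set"
  assumes Qc: "Q \<in> cubes" and Qp: "0 < emeasure lebesgue Q" and Qf: "emeasure lebesgue Q < \<infinity>"
  shows "indicator Q \<in> X1"
  unfolding kothe_def
proof (intro CollectI conjI ballI)
  have [measurable]: "Q \<in> sets lebesgue" using cubes_sets[OF Qc] .
  show "(indicator Q :: 'a \<Rightarrow> real) \<in> borel_measurable lebesgue" by measurable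
  fix f assume f: "f \<in> X"
  have mf[measurable]: "f \<in> borel_measurable lebesgue" using meas[OF f] .
  have AEf: "AE x in lebesgue. maximal f x \<noteq> \<infinity>" using bnd f unfolding maximal_in_def by auto
  have "\<exists>x\<in>Q. maximal f x \<noteq> \<infinity>"
  proof (rule ccontr)
    assume nx: "\<not> ?thesis"
    have "AE x in lebesgue. x \<notin> Q" using AEf by eventually_elim (use nx in auto)
    then have "emeasure lebesgue Q = 0"
      using AE_iff_measurable[of Q lebesgue "\<lambda>x. x \<notin> Q"] sets.sets_into_space[of Q lebesgue] by auto
    then show False using Qp by simp
  qed
  then obtain x where x: "x \<in> Q" "maximal f x \<noteq> \<infinity>" by blast
  have "avg f Q \<le> maximal f x" by (rule max_ge[OF Qc x(1)])
  then have "avg f Q \<noteq> \<infinity>" using x(2) by (auto simp: top_unique)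
  then have I: "(\<integral>\<^sup>+y\<in>Q. ennreal \<bar>f y\<bar> \<partial>lebesgue) \<noteq> \<infinity>"
    unfolding avg_def using Qf by (auto simp: ennreal_divide_eq_top_iff)
  have "(\<integral>\<^sup>+y. ennreal (norm (f y * indicator Q y)) \<partial>lebesgue) = (\<integral>\<^sup>+y\<in>Q. ennreal \<bar>f y\<bar> \<partial>lebesgue)"
    by (intro nn_integral_cong) (auto split: split_indicator)
  then have "(\<integral>\<^sup>+y. ennreal (norm (f y * indicator Q y)) \<partial>lebesgue) < \<infinity>" using I by (simp add: top.not_eq_extremum)
  then show "integrable lebesgue (\<lambda>y. f y * indicator Q y)"
    by (intro integrableI_bounded) measurable
qed

lemma main:
  assumes h: "h \<in> kothe X1"
  shows "maximal_in (kothe X1) h \<and> N2 (\<lambda>x. enn2real (maximal h x)) \<le> ennreal C * N2 h"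
proof -
  have mh[measurable]: "h \<in> borel_measurable lebesgue" using h unfolding kothe_def by auto
  have mM[measurable]: "maximal h \<in> borel_measurable lebesgue" by (rule maximal_meas)
  have N2f: "N2 h \<noteq> \<infinity>" by (rule N2_fin[OF h])
  have KEY: "(\<integral>\<^sup>+x. maximal h x * ennreal \<bar>g x\<bar> \<partial>lebesgue) \<le> ennreal C * N2 h * N1 g" if g: "g \<in> X1" for g
    by (rule key[OF mh g N1_fin[OF g]])
  have KEYfin: "(\<integral>\<^sup>+x. maximal h x * ennreal \<bar>g x\<bar> \<partial>lebesgue) < \<infinity>" if g: "g \<in> X1" for g
  proof (rule le_less_trans[OF KEY[OF g]])
    show "ennreal C * N2 h * N1 g < \<infinity>" using N2f N1_fin[OF g]
      by (simp add: ennreal_mult_less_top top.not_eq_extremum)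
  qed
  define Qn where "Qn = (\<lambda>n::nat. box (-(real n + 1) *\<^sub>R One) ((real n + 1) *\<^sub>R (One::'a)))"
  have AEn: "AE x in lebesgue. x \<in> Qn n \<longrightarrow> maximal h x \<noteq> \<infinity>" for n
  proof -
    have gX: "indicator (Qn n) \<in> X1" unfolding Qn_def
      by (rule ind_X1[OF cube_n cube_n_meas(1) cube_n_meas(2)])
    have [measurable]: "Qn n \<in> sets lebesgue" unfolding Qn_def by simp
    have "(\<integral>\<^sup>+x. maximal h x * ennreal \<bar>indicator (Qn n) x\<bar> \<partial>lebesgue) \<noteq> \<infinity>"
      using KEYfin[OF gX] by simp
    then have "AE x in lebesgue. maximal h x * ennreal \<bar>indicator (Qn n) x\<bar> \<noteq> \<infinity>"
      by (rule nn_integral_PInf_AE[rotated]) measurable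
    then show ?thesis by eventually_elim (auto split: split_indicator)
  qed
  have AEM: "AE x in lebesgue. maximal h x \<noteq> \<infinity>"
  proof -
    have "AE x in lebesgue. \<forall>n. x \<in> Qn n \<longrightarrow> maximal h x \<noteq> \<infinity>" unfolding AE_all_countable using AEn by blast
    then show ?thesis
    proof eventually_elim
      case (elim x)
      obtain n where "x \<in> Qn n" unfolding Qn_def using cube_n_cover by blast
      then show ?case using elim by blast
    qed
  qed
  have bndI: "(\<integral>\<^sup>+x. ennreal \<bar>g x * enn2real (maximal h x)\<bar> \<partial>lebesgue) \<le> (\<integral>\<^sup>+x. maximal h x * ennreal \<bar>g x\<bar> \<partial>lebesgue)" for g
  proof (intro nn_integral_mono)
    fix x
    have "ennreal \<bar>g x\<bar> * ennreal (enn2real (maximal h x)) \<le> ennreal \<bar>g x\<bar> * maximal h x"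
      by (intro mult_left_mono enn_le) simp
    then show "ennreal \<bar>g x * enn2real (maximal h x)\<bar> \<le> maximal h x * ennreal \<bar>g x\<bar>"
      by (simp add: abs_mult ennreal_mult mult.commute)
  qed
  have inX2: "(\<lambda>x. enn2real (maximal h x)) \<in> kothe X1"
    unfolding kothe_def[of X1]
  proof (intro CollectI conjI ballI)
    show "(\<lambda>x. enn2real (maximal h x)) \<in> borel_measurable lebesgue" by measurable
    fix g assume g: "g \<in> X1"
    have [measurable]: "g \<in> borel_measurable lebesgue" using X1_meas[OF g] .
    have "(\<integral>\<^sup>+x. ennreal (norm (g x * enn2real (maximal h x))) \<partial>lebesgue) < \<infinity>"
      using le_less_trans[OF bndI KEYfin[OF g]] by simp
    then show "integrable lebesgue (\<lambda>x. g x * enn2real (maximal h x))"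
      by (intro integrableI_bounded) measurable
  qed
  have "N2 (\<lambda>x. enn2real (maximal h x)) \<le> ennreal C * N2 h"
    unfolding kothe_norm_def[of X1 N1 "\<lambda>x. enn2real (maximal h x)"]
  proof (rule SUP_least)
    fix g assume "g \<in> {g \<in> X1. N1 g = 1}"
    then have g: "g \<in> X1" "N1 g = 1" by auto
    show "(\<integral>\<^sup>+x. ennreal \<bar>g x * enn2real (maximal h x)\<bar> \<partial>lebesgue) \<le> ennreal C * N2 h"
      using order_trans[OF bndI KEY[OF g(1)]] g(2) by simp
  qed
  then show ?thesis using AEM inX2 unfolding maximal_in_def by blast
qed

end

theorem theorem4p1:
  fixes X :: "('a::euclidean_space \<Rightarrow> real) set" and nX :: "('a \<Rightarrow> real) \<Rightarrow> real" and C :: real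
  assumes "qbfs X nX" and "fatou_property X nX"
    and "C \<ge> 0"
    and "\<forall>f\<in>X. maximal_in X f \<and> nX (\<lambda>x. enn2real (maximal f x)) \<le> C * nX f"
  shows "\<forall>h\<in>kothe (kothe X). maximal_in (kothe (kothe X)) h \<and>
           kothe_norm (kothe X) (kothe_norm X nX) (\<lambda>x. enn2real (maximal h x))
             \<le> ennreal C * kothe_norm (kothe X) (kothe_norm X nX) h"
proof -
  interpret mset X nX C using assms by (rule mset.intro)
  show ?thesis using main by blast
qed

end
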